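(* Let $(F_n)_{n\ge0}$ be the Fibonacci sequence ($F_0=0$, $F_1=1$, $F_{n+2}=F_{n+1}+F_n$) and $\Phi=(1+\sqrt5)/2$. Let $c,d$ be fixed positive integers. Then for all positive integers $n,m$ with $n\geq 2$ and $m\leq\lfloor (n+1)/2\rfloor+1$, \[\mathrm{lcm}\left(cF_m+dF_{m-1},\,cF_{m+1}+dF_m,\,\dots,\,cF_n+dF_{n-1}\right)\geq \gcd(c,d)\left(\frac{c\Phi+d}{\Phi\gcd(c,d)}\right)^{\frac{n-1}{2}}\Phi^{\frac{n^2}{4}-\frac{n}{2}-\frac{7}{4}}.\] *)

theory Defs
  imports "HOL-Analysis.Analysis" "HOL-Number_Theory.Fib"
begin

definition golden_ratio :: real where
  "golden_ratio = (1 + sqrt 5) / 2"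

end

theory Submission imports Defs "HOL-Computational_Algebra.Computational_Algebra"
begin

definition hh :: "nat \<Rightarrow> nat \<Rightarrow> nat \<Rightarrow> nat" where
  "hh c d k = c * fib k + d * fib (k - 1)"

lemma hh_rec: "k \<ge> 1 \<Longrightarrow> hh c d (k + 2) = hh c d (k + 1) + hh c d k"
proof -
  assume "k \<ge> 1"
  then obtain j where k: "k = Suc j" by (cases k) auto
  show ?thesis unfolding hh_def k by (simp add: fib_plus_2 algebra_simps)
qed

lemma hh_coprime: assumes "coprime c d" "k \<ge> 1" shows "coprime (hh c d k) (hh c d (Suc k))"
  using assms(2)
proof (induction k rule: nat_induct_at_least)
  case base
  then show ?case using assms(1) by (simp add: hh_def numeral_2_eq_2 coprime_iff_gcd_eq_1)
next
  case (Suc k)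
  have "hh c d (Suc (Suc k)) = hh c d (Suc k) + hh c d k"
    using hh_rec[of k c d] Suc by simp
  then show ?case using Suc.IH Suc.prems
    by (simp add: coprime_iff_gcd_eq_1 gcd.commute)
qed

lemma hh_add: "i \<ge> 1 \<Longrightarrow> hh c d (i + t + 1) = hh c d (i + 1) * fib (t + 1) + hh c d i * fib t"
proof -
  assume "i \<ge> 1"
  then obtain j where i: "i = Suc j" by (cases i) auto
  have e1: "fib (Suc j + t + 1) = fib (Suc (Suc j)) * fib (Suc t) + fib (Suc j) * fib t"
    using fib_add[of t "Suc j"] by (simp add: algebra_simps)
  have e2: "fib (Suc j + t + 1 - 1) = fib (Suc j) * fib (Suc t) + fib j * fib t"
    using fib_add[of t j] by (simp add: algebra_simps)
  show ?thesis unfolding hh_def i e1 e2 by (simp add: algebra_simps)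
qed

lemma hh_dvd_fib:
  assumes "coprime c d" "i \<ge> 1" "i < j" "q dvd hh c d i" "q dvd hh c d j"
  shows "q dvd fib (j - i)"
proof -
  obtain t where j: "j = i + t + 1" using assms(3) by (metis add.commute add_Suc less_iff_Suc_add plus_1_eq_Suc)
  have e: "hh c d j = hh c d (i + 1) * fib (t + 1) + hh c d i * fib t"
    using hh_add[OF assms(2)] j by simp
  have "q dvd hh c d (i + 1) * fib (t + 1)"
    using assms(4,5) e by (metis dvd_add_right_iff dvd_mult2 add.commute)
  moreover have "coprime q (hh c d (i + 1))"
    using hh_coprime[OF assms(1,2)] assms(4) coprime_imp_coprime by (metis Suc_eq_plus1 coprime_common_divisor coprime_def dvd_trans)
  ultimately have "q dvd fib (t + 1)" using coprime_dvd_mult_right_iff by blast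
  then show ?thesis using j by simp
qed

lemma count_le:
  assumes cd: "coprime c d" and m: "m \<ge> 1" and S: "S = {k\<in>{m..n}. q dvd hh c d k}" and ne: "S \<noteq> {}"
  shows "card S \<le> card {s\<in>{1..n-m}. q dvd fib s} + 1"
proof -
  define k0 where "k0 = Min S"
  have fin: "finite S" using S by simp
  have k0S: "k0 \<in> S" using fin ne k0_def by simp
  have sub: "(\<lambda>k. k - k0) ` (S - {k0}) \<subseteq> {s\<in>{1..n-m}. q dvd fib s}"
  proof
    fix x assume "x \<in> (\<lambda>k. k - k0) ` (S - {k0})"
    then obtain k where k: "k \<in> S" "k \<noteq> k0" "x = k - k0" by auto
    have "k0 \<le> k" using k fin k0_def by simp
    hence lt: "k0 < k" using k by simp
    have "k0 \<ge> m" "k \<le> n" using k0S k S by auto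
    moreover have "q dvd fib (k - k0)"
      using hh_dvd_fib[OF cd _ lt, of q] k0S k S m by auto
    ultimately show "x \<in> {s\<in>{1..n-m}. q dvd fib s}" using k lt by auto
  qed
  have inj: "inj_on (\<lambda>k. k - k0) (S - {k0})"
  proof (rule inj_onI)
    fix x y assume "x \<in> S - {k0}" "y \<in> S - {k0}" "x - k0 = y - k0"
    moreover have "k0 \<le> x" "k0 \<le> y" using calculation fin k0_def by auto
    ultimately show "x = y" by simp
  qed
  have "card (S - {k0}) \<le> card {s\<in>{1..n-m}. q dvd fib s}"
    using card_inj_on_le[OF inj sub] by simp
  moreover have "card S = card (S - {k0}) + 1" using fin k0S
    by (simp add: card_Diff_singleton) (metis Suc_pred card_gt_0_iff ne)
  ultimately show ?thesis by simp
qed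

lemma mult_card:
  fixes p x :: nat
  assumes "prime p" "x \<noteq> 0" "multiplicity p x \<le> B"
  shows "card {a\<in>{1..B}. p ^ a dvd x} = multiplicity p x"
proof -
  have nu: "\<not> is_unit p" using prime_gt_1_nat[OF assms(1)] by simp
  have iff: "p ^ a dvd x \<longleftrightarrow> a \<le> multiplicity p x" for a
    by (rule power_dvd_iff_le_multiplicity) (use assms(2) nu in auto)
  have "{a\<in>{1..B}. p ^ a dvd x} = {1..multiplicity p x}"
    unfolding iff using assms(3) by auto
  then show ?thesis by simp
qed

lemma card_swap:
  assumes "finite A" "finite K"
  shows "(\<Sum>k\<in>K. card {a\<in>A. R a k}) = (\<Sum>a\<in>A. card {k\<in>K. R a k})"
proof -
  have "\<And>k. card {a\<in>A. R a k} = (\<Sum>a\<in>A. if R a k then 1 else 0)"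
    using sum.inter_filter[OF assms(1), of "\<lambda>_. 1::nat"] by simp
  moreover have "\<And>a. card {k\<in>K. R a k} = (\<Sum>k\<in>K. if R a k then 1 else 0)"
    using sum.inter_filter[OF assms(2), of "\<lambda>_. 1::nat"] by simp
  ultimately show ?thesis by (simp only:) (rule sum.swap)
qed

lemma mult_le_self:
  fixes p x :: nat
  assumes "prime p" "x \<noteq> 0"
  shows "multiplicity p x \<le> x"
proof -
  have "p ^ multiplicity p x dvd x" by (rule multiplicity_dvd)
  hence "p ^ multiplicity p x \<le> x" using assms(2) by (simp add: dvd_imp_le)
  moreover have "2 ^ multiplicity p x \<le> p ^ multiplicity p x"
    using power_mono[OF prime_ge_2_nat[OF assms(1)], of "multiplicity p x"] by simp
  moreover have "multiplicity p x < 2 ^ multiplicity p x" by (rule less_exp)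
  ultimately show ?thesis by linarith
qed

lemma hh_pos: "c > 0 \<Longrightarrow> k \<ge> 1 \<Longrightarrow> hh c d k > 0"
  unfolding hh_def using fib_neq_0_nat[of k] by simp

lemma hh_eq0: "c > 0 \<Longrightarrow> hh c d k = 0 \<longleftrightarrow> k = 0"
  unfolding hh_def using fib_neq_0_nat[of k] by (cases k) auto

lemma fib_eq0: "fib k = 0 \<longleftrightarrow> k = 0"
  using fib_neq_0_nat[of k] by (cases k) auto

lemma main_dvd:
  assumes cd: "coprime c d" and c: "c > 0" and m: "m \<ge> 1"
  shows "(\<Prod>k\<in>{m..n}. hh c d k) dvd Lcm (hh c d ` {m..n}) * (\<Prod>s\<in>{1..n-m}. fib s)"
proof -
  define K where "K = {m..n}"
  define Q where "Q = (\<Prod>k\<in>K. hh c d k)"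
  define L where "L = Lcm (hh c d ` K)"
  define P where "P = (\<Prod>s\<in>{1..n-m}. fib s)"
  have hpos: "\<And>k. k \<in> K \<Longrightarrow> hh c d k > 0" using hh_pos[OF c] m K_def by auto
  have "\<forall>k\<in>K. hh c d k \<noteq> 0" using hpos by auto
  hence Q0: "Q \<noteq> 0" unfolding Q_def by (simp add: K_def)
  have P0: "P \<noteq> 0" unfolding P_def using fib_neq_0_nat by simp
  have L0: "L \<noteq> 0" unfolding L_def using hpos K_def by (simp add: Lcm_0_iff) force
  have hdvdL: "\<And>k. k \<in> K \<Longrightarrow> hh c d k dvd L" unfolding L_def by (simp add: dvd_Lcm)
  have "Q dvd L * P"
  proof (rule multiplicity_le_imp_dvd[OF Q0])
    fix p :: nat assume p: "prime p"
    define B where "B = Q + P"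
    have hleQ: "hh c d k \<le> Q" if k: "k \<in> K" for k
    proof -
      have "hh c d k dvd Q" unfolding Q_def using k K_def by (intro dvd_prodI) auto
      then show ?thesis using Q0 by (simp add: dvd_imp_le)
    qed
    have "multiplicity p Q = (\<Sum>k\<in>K. multiplicity p (hh c d k))"
      unfolding Q_def using p c m by (intro prime_elem_multiplicity_prod_distrib) (auto simp: K_def hh_eq0)
    also have "\<dots> = (\<Sum>k\<in>K. card {a\<in>{1..B}. p ^ a dvd hh c d k})"
    proof (rule sum.cong[OF refl])
      fix k assume k: "k \<in> K"
      have "multiplicity p (hh c d k) \<le> B"
        using mult_le_self[OF p, of "hh c d k"] hpos[OF k] hleQ[OF k] B_def by linarith
      then show "multiplicity p (hh c d k) = card {a\<in>{1..B}. p ^ a dvd hh c d k}"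
        using mult_card[OF p] hpos[OF k] by simp
    qed
    also have "\<dots> = (\<Sum>a\<in>{1..B}. card {k\<in>K. p ^ a dvd hh c d k})"
      by (rule card_swap) (auto simp: K_def)
    also have "\<dots> \<le> (\<Sum>a\<in>{1..B}. (if a \<le> multiplicity p L then 1 else 0) + card {s\<in>{1..n-m}. p ^ a dvd fib s})"
    proof (rule sum_mono)
      fix a assume a: "a \<in> {1..B}"
      show "card {k\<in>K. p ^ a dvd hh c d k} \<le> (if a \<le> multiplicity p L then 1 else 0) + card {s\<in>{1..n-m}. p ^ a dvd fib s}"
      proof (cases "{k\<in>K. p ^ a dvd hh c d k} = {}")
        case True then show ?thesis unfolding True by simp
      next
        case False
        then obtain k where k: "k \<in> K" "p ^ a dvd hh c d k" by auto
        hence "p ^ a dvd L" using hdvdL dvd_trans by blast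
        hence "a \<le> multiplicity p L"
          using power_dvd_iff_le_multiplicity[of L p a] L0 prime_gt_1_nat[OF p] by auto
        moreover have "card {k\<in>K. p ^ a dvd hh c d k} \<le> card {s\<in>{1..n-m}. p ^ a dvd fib s} + 1"
          using count_le[OF cd m _ False] K_def by simp
        ultimately show ?thesis by simp
      qed
    qed
    also have "\<dots> = card {a\<in>{1..B}. a \<le> multiplicity p L} + (\<Sum>a\<in>{1..B}. card {s\<in>{1..n-m}. p ^ a dvd fib s})"
      by (simp add: sum.distrib sum.If_cases Int_def)
    also have "card {a\<in>{1..B}. a \<le> multiplicity p L} \<le> multiplicity p L"
    proof -
      have "{a\<in>{1..B}. a \<le> multiplicity p L} \<subseteq> {1..multiplicity p L}" by auto
      then show ?thesis using card_mono[of "{1..multiplicity p L}"] by fastforce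
    qed
    also have "(\<Sum>a\<in>{1..B}. card {s\<in>{1..n-m}. p ^ a dvd fib s}) = (\<Sum>s\<in>{1..n-m}. card {a\<in>{1..B}. p ^ a dvd fib s})"
      by (rule card_swap[symmetric]) auto
    also have "\<dots> = (\<Sum>s\<in>{1..n-m}. multiplicity p (fib s))"
    proof (rule sum.cong[OF refl])
      fix s assume s: "s \<in> {1..n-m}"
      have fs: "fib s \<noteq> 0" using s fib_neq_0_nat by auto
      have "fib s dvd P" unfolding P_def using s by (intro dvd_prodI) auto
      hence "fib s \<le> P" using P0 by (simp add: dvd_imp_le)
      hence "multiplicity p (fib s) \<le> B"
        using mult_le_self[OF p fs] B_def by linarith
      then show "card {a\<in>{1..B}. p ^ a dvd fib s} = multiplicity p (fib s)"
        using mult_card[OF p fs] by simp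
    qed
    also have "\<dots> = multiplicity p P"
      unfolding P_def using p by (intro prime_elem_multiplicity_prod_distrib[symmetric]) (auto simp: fib_eq0)
    also have "multiplicity p L + multiplicity p P = multiplicity p (L * P)"
      using p L0 P0 by (simp add: prime_elem_multiplicity_mult_distrib)
    finally show "multiplicity p Q \<le> multiplicity p (L * P)" by simp
  qed
  then show ?thesis unfolding Q_def L_def P_def K_def .
qed

lemma phi_gt1: "golden_ratio > 1"
  unfolding golden_ratio_def using real_sqrt_gt_1_iff[of 5] by simp

lemma phi_le2: "golden_ratio \<le> 2"
proof -
  have s9: "sqrt 9 = 3" by (rule real_sqrt_unique) auto
  have "sqrt 5 \<le> sqrt 9" by (rule real_sqrt_le_mono) simp
  hence "sqrt 5 \<le> 3" by (simp only: s9)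
  then show ?thesis unfolding golden_ratio_def by simp
qed

lemma phi_sq: "golden_ratio ^ 2 = golden_ratio + 1"
  unfolding golden_ratio_def by (simp add: power2_eq_square field_simps)

lemma fib_lower: "golden_ratio ^ k \<le> real (fib (k + 2)) \<and> golden_ratio ^ (Suc k) \<le> real (fib (Suc k + 2))"
proof (induction k)
  case 0
  then show ?case using phi_le2 by (simp add: numeral_3_eq_3 numeral_2_eq_2)
next
  case (Suc k)
  have "golden_ratio ^ Suc (Suc k) = golden_ratio^2 * golden_ratio ^ k"
    by (simp add: power2_eq_square mult.assoc)
  also have "\<dots> = golden_ratio ^ Suc k + golden_ratio ^ k"
    using phi_sq by (simp add: algebra_simps)
  also have "\<dots> \<le> real (fib (Suc k + 2)) + real (fib (k + 2))" using Suc by simp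
  also have "\<dots> = real (fib (Suc (Suc k) + 2))"
    using fib_plus_2[of "Suc (Suc k)"] by (simp add: numeral_2_eq_2)
  finally show ?case using Suc by simp
qed

lemma fib_upper: "real (fib (k + 1)) \<le> golden_ratio ^ k \<and> real (fib (Suc k + 1)) \<le> golden_ratio ^ Suc k"
proof (induction k)
  case 0
  then show ?case using phi_gt1 by (simp add: numeral_2_eq_2)
next
  case (Suc k)
  have "real (fib (Suc (Suc k) + 1)) = real (fib (Suc k + 1)) + real (fib (k + 1))"
    using fib_plus_2[of "Suc k"] by (simp add: numeral_2_eq_2)
  also have "\<dots> \<le> golden_ratio ^ Suc k + golden_ratio ^ k" using Suc by simp
  also have "\<dots> = golden_ratio^2 * golden_ratio ^ k"
    using phi_sq by (simp add: algebra_simps)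
  also have "\<dots> = golden_ratio ^ Suc (Suc k)"
    by (simp add: power2_eq_square mult.assoc)
  finally show ?case using Suc by simp
qed

lemma fib_lower2: "golden_ratio ^ k \<le> golden_ratio * real (fib (k + 1))"
proof (cases k)
  case 0
  then show ?thesis using phi_gt1 by simp
next
  case (Suc j)
  have "golden_ratio ^ j \<le> real (fib (j + 2))" using fib_lower[of j] by simp
  then have "golden_ratio * golden_ratio ^ j \<le> golden_ratio * real (fib (j + 2))"
    using phi_gt1 by simp
  then show ?thesis using Suc by (simp add: numeral_2_eq_2)
qed

lemma hh_lower:
  "(c * golden_ratio + d) / golden_ratio * golden_ratio ^ j \<le> real (hh c d (j + 2))"
proof -
  have g: "golden_ratio > 0" using phi_gt1 by simp
  have "(c * golden_ratio + d) / golden_ratio * golden_ratio ^ j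
      = c * golden_ratio ^ j + d * (golden_ratio ^ j / golden_ratio)"
    using g by (simp add: field_simps)
  also have "\<dots> \<le> c * real (fib (j + 2)) + d * real (fib (j + 1))"
  proof (intro add_mono mult_left_mono)
    show "golden_ratio ^ j \<le> real (fib (j + 2))" using fib_lower[of j] by simp
    show "golden_ratio ^ j / golden_ratio \<le> real (fib (j + 1))"
      using fib_lower2[of j] g by (simp add: divide_le_eq mult.commute)
  qed auto
  also have "\<dots> = real (hh c d (j + 2))" unfolding hh_def by simp
  finally show ?thesis .
qed

lemma lcm_bound:
  assumes cd: "coprime c d" and c: "c > 0" and M: "M \<ge> 2" "M \<le> n"
  shows "((c * golden_ratio + d) / golden_ratio) ^ (n - M + 1) * golden_ratio ^ ((n - M + 1) * (M - 2) + (n - M))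
     \<le> real (Lcm (hh c d ` {M..n}))"
proof -
  define N where "N = n - M"
  define C where "C = (c * golden_ratio + d) / golden_ratio"
  define S where "S = (\<Sum>i<N. i)"
  define E where "E = (N + 1) * (M - 2) + N"
  define Q where "Q = (\<Prod>k\<in>{M..n}. hh c d k)"
  define L where "L = Lcm (hh c d ` {M..n})"
  define P where "P = (\<Prod>s\<in>{1..N}. fib s)"
  have g: "golden_ratio > 0" using phi_gt1 by simp
  have C0: "C \<ge> 0" unfolding C_def using g by simp
  have dv: "Q dvd L * P" unfolding Q_def L_def P_def N_def using main_dvd[OF cd c, of M n] M by simp
  have Q0: "Q \<noteq> 0" unfolding Q_def using hh_pos[OF c] M by auto
  have P0: "P \<noteq> 0" unfolding P_def using fib_neq_0_nat by simp
  have "\<forall>k\<in>{M..n}. hh c d k > 0" using hh_pos[OF c] M by auto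
  hence L0: "L \<noteq> 0" unfolding L_def by (auto simp: Lcm_0_iff)
  have "Q \<le> L * P" using dv P0 L0 by (simp add: dvd_imp_le)
  hence QLP: "real Q \<le> real L * real P" by (simp only: of_nat_mult[symmetric] of_nat_le_iff)
  have Qeq: "Q = (\<Prod>i\<in>{0..N}. hh c d (i + M))"
    unfolding Q_def N_def using prod.shift_bounds_cl_nat_ivl[of "hh c d" 0 M "n - M"] M by simp
  have "C ^ (N + 1) * golden_ratio ^ (E + S) = (\<Prod>i\<in>{0..N}. C * golden_ratio ^ (M - 2 + i))"
  proof -
    have iv: "{0..N} = {..<Suc N}" by auto
    have "(\<Sum>i\<in>{0..N}. M - 2 + i) = (N + 1) * (M - 2) + (\<Sum>i\<in>{0..N}. i)"
      by (simp add: sum.distrib)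
    also have "(\<Sum>i\<in>{0..N}. i) = S + N" unfolding iv S_def by (rule sum.lessThan_Suc)
    finally have "(\<Sum>i\<in>{0..N}. M - 2 + i) = E + S" unfolding E_def by simp
    then have "(\<Prod>i\<in>{0..N}. golden_ratio ^ (M - 2 + i)) = golden_ratio ^ (E + S)"
      by (simp add: power_sum[symmetric])
    then show ?thesis by (simp add: prod.distrib)
  qed
  also have "\<dots> \<le> (\<Prod>i\<in>{0..N}. real (hh c d (i + M)))"
  proof (rule prod_mono)
    fix i assume "i \<in> {0..N}"
    have h1: "C * golden_ratio ^ (M - 2 + i) \<le> real (hh c d (M - 2 + i + 2))"
      unfolding C_def by (rule hh_lower)
    have e: "M - 2 + i + 2 = i + M" using M by simp
    have "C * golden_ratio ^ (M - 2 + i) \<le> real (hh c d (i + M))" using h1 unfolding e .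
    then show "0 \<le> C * golden_ratio ^ (M - 2 + i) \<and> C * golden_ratio ^ (M - 2 + i) \<le> real (hh c d (i + M))"
      using C0 g by simp
  qed
  also have "\<dots> = real Q" unfolding Qeq by simp
  finally have low: "C ^ (N + 1) * golden_ratio ^ (E + S) \<le> real Q" .
  have "real P = (\<Prod>i<N. real (fib (Suc i)))"
    unfolding P_def using prod.atLeast1_atMost_eq[of "\<lambda>s. real (fib s)" N] by simp
  also have "\<dots> \<le> (\<Prod>i<N. golden_ratio ^ i)"
    by (rule prod_mono) (use fib_upper in simp)
  also have "\<dots> = golden_ratio ^ S" unfolding S_def by (simp add: power_sum)
  finally have up: "real P \<le> golden_ratio ^ S" .
  have "C ^ (N + 1) * golden_ratio ^ E * golden_ratio ^ S \<le> real L * golden_ratio ^ S"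
  proof -
    have "C ^ (N + 1) * golden_ratio ^ E * golden_ratio ^ S = C ^ (N + 1) * golden_ratio ^ (E + S)"
      by (simp add: power_add)
    also have "\<dots> \<le> real L * real P" using low QLP by linarith
    also have "\<dots> \<le> real L * golden_ratio ^ S" using up by (simp add: mult_left_mono)
    finally show ?thesis .
  qed
  hence "C ^ (N + 1) * golden_ratio ^ E \<le> real L" using g by simp
  then show ?thesis unfolding C_def E_def N_def L_def .
qed

lemma exps:
  fixes n :: nat
  assumes "n \<ge> 2"
  defines "M \<equiv> (n + 1) div 2 + 1"
  shows "M \<ge> 2" "M \<le> n" "(real n - 1) / 2 \<le> real (n - M + 1)"
    "(real n)^2 / 4 - real n / 2 - 7 / 4 \<le> real ((n - M + 1) * (M - 2) + (n - M))"
proof -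
  obtain j where j: "n = 2 * j \<or> n = 2 * j + 1" by (metis dvd_mult_div_cancel odd_two_times_div_two_succ)
  have j1: "j \<ge> 1" using j assms by auto
  show "M \<ge> 2" "M \<le> n" using j j1 unfolding M_def by auto
  show "(real n - 1) / 2 \<le> real (n - M + 1)"
    using j j1 unfolding M_def by (auto simp: field_simps)
  show "(real n)^2 / 4 - real n / 2 - 7 / 4 \<le> real ((n - M + 1) * (M - 2) + (n - M))"
  proof (cases "n = 2 * j")
    case True
    have "M = j + 1" using True unfolding M_def by simp
    hence e: "(n - M + 1) * (M - 2) + (n - M) = j * (j - 1) + (j - 1)" using True j1 by simp
    have "real (j * (j - 1) + (j - 1)) = real j * (real j - 1) + (real j - 1)" using j1 by (simp add: of_nat_diff)
    then show ?thesis unfolding e using True by (simp add: power2_eq_square field_simps)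
  next
    case False
    hence n: "n = 2 * j + 1" using j by simp
    have "M = j + 2" using n unfolding M_def by simp
    hence e: "(n - M + 1) * (M - 2) + (n - M) = j * j + (j - 1)" using n j1 by simp
    have "real (j * j + (j - 1)) = real j * real j + (real j - 1)" using j1 by (simp add: of_nat_diff)
    then show ?thesis unfolding e using n by (simp add: power2_eq_square field_simps)
  qed
qed

theorem corollary1:
  fixes c d n m :: nat
  assumes "c > 0" and "d > 0" and "n \<ge> 2" and "m > 0"
    and "m \<le> (n + 1) div 2 + 1"
  shows "real (Lcm {c * fib k + d * fib (k - 1) | k. m \<le> k \<and> k \<le> n})
    \<ge> real (gcd c d)
       * ((c * golden_ratio + d) / (golden_ratio * gcd c d)) powr ((real n - 1) / 2)
       * golden_ratio powr ((real n)^2 / 4 - real n / 2 - 7 / 4)"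
proof -
  define g where "g = gcd c d"
  define c' where "c' = c div g"
  define d' where "d' = d div g"
  define M where "M = (n + 1) div 2 + 1"
  define N where "N = n - M"
  define E where "E = (N + 1) * (M - 2) + N"
  have g0: "g > 0" unfolding g_def using assms by simp
  have cc: "c = g * c'" "d = g * d'" unfolding c'_def d'_def g_def by simp_all
  have cop: "coprime c' d'" unfolding c'_def d'_def g_def using div_gcd_coprime assms by blast
  have c'0: "c' > 0" using cc assms by simp
  have ex: "M \<ge> 2" "M \<le> n" "(real n - 1) / 2 \<le> real (N + 1)"
    "(real n)^2 / 4 - real n / 2 - 7 / 4 \<le> real E"
    using exps[OF assms(3)] unfolding M_def N_def E_def by simp_all
  have seteq: "{c * fib k + d * fib (k - 1) | k. a \<le> k \<and> k \<le> n} = (*) g ` (hh c' d' ` {a..n})" for a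
  proof -
    have "{c * fib k + d * fib (k - 1) | k. a \<le> k \<and> k \<le> n} = (\<lambda>k. g * hh c' d' k) ` {a..n}"
      unfolding hh_def cc by (auto simp: algebra_simps)
    then show ?thesis by (simp add: image_image)
  qed
  have d1: "Lcm ((*) g ` (hh c' d' ` {M..n})) dvd Lcm ((*) g ` (hh c' d' ` {m..n}))"
    using assms(5) M_def by (intro Lcm_subset) auto
  have nz: "Lcm ((*) g ` (hh c' d' ` {m..n})) \<noteq> 0"
    using c'0 assms(4) g0 by (auto simp: Lcm_0_iff hh_eq0)
  have le1: "Lcm ((*) g ` (hh c' d' ` {M..n})) \<le> Lcm ((*) g ` (hh c' d' ` {m..n}))"
    using dvd_imp_le[OF d1] nz by simp
  have eqg: "Lcm ((*) g ` (hh c' d' ` {M..n})) = g * Lcm (hh c' d' ` {M..n})"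
    using Lcm_mult[of "hh c' d' ` {M..n}" g] ex by simp
  define C where "C = (c' * golden_ratio + d') / golden_ratio"
  have phi: "golden_ratio > 1" by (rule phi_gt1)
  have Ceq: "(c * golden_ratio + d) / (golden_ratio * gcd c d) = C"
  proof -
    have "(c * golden_ratio + d) / (golden_ratio * g) = C"
      unfolding C_def cc using g0 phi by (simp add: field_simps)
    then show ?thesis unfolding g_def .
  qed
  have C1: "C \<ge> 1"
  proof -
    have "real c' \<ge> 1" using c'0 by simp
    hence "golden_ratio \<le> real c' * golden_ratio" using mult_right_mono[of 1 "real c'" golden_ratio] phi by simp
    hence "golden_ratio \<le> c' * golden_ratio + d'" by simp
    then show ?thesis unfolding C_def using phi by simp
  qed
  have lb: "C ^ (N + 1) * golden_ratio ^ E \<le> real (Lcm (hh c' d' ` {M..n}))"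
    using lcm_bound[OF cop c'0 ex(1,2)] unfolding C_def N_def E_def by simp
  have p1: "C powr ((real n - 1) / 2) \<le> C ^ (N + 1)"
  proof -
    have e: "C powr (real (N + 1)) = C ^ (N + 1)" using C1 by (intro powr_realpow) simp
    show ?thesis using powr_mono[OF ex(3) C1] unfolding e .
  qed
  have p2: "golden_ratio powr ((real n)^2 / 4 - real n / 2 - 7 / 4) \<le> golden_ratio ^ E"
    using powr_mono[OF ex(4)] phi by (simp add: powr_realpow)
  have "real g * C powr ((real n - 1) / 2) * golden_ratio powr ((real n)^2 / 4 - real n / 2 - 7 / 4)
      \<le> real g * (C ^ (N + 1) * golden_ratio ^ E)"
  proof -
    have "C powr ((real n - 1) / 2) * golden_ratio powr ((real n)^2 / 4 - real n / 2 - 7 / 4)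
        \<le> C ^ (N + 1) * golden_ratio ^ E"
      by (rule mult_mono[OF p1 p2]) (use C1 in auto)
    then show ?thesis unfolding mult.assoc by (rule mult_left_mono) simp
  qed
  also have "\<dots> \<le> real g * real (Lcm (hh c' d' ` {M..n}))" using lb g0 by simp
  also have "\<dots> = real (Lcm ((*) g ` (hh c' d' ` {M..n})))" using eqg by simp
  also have "\<dots> \<le> real (Lcm ((*) g ` (hh c' d' ` {m..n})))" using le1 by simp
  finally show ?thesis unfolding seteq Ceq g_def by simp
qed

end
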